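(* Let $X$ be a locally compact metric space and $\Gamma$ a pseudo*group of local homeomorphisms of $X$ which is minimal and equicontinuous. Let $X_0$ be a relatively compact open subset of $X$, and fix $\chi\in C_c(X)_{>0}$ with $\chi=1$ on $X_0$. For $\zeta\in C_c(X)_{\ge0}$ and $\psi\in C_c(X)_{>0}$ set $$(\zeta:\psi)=\inf\Big\{\sum_{i=1}^n c_i \;\Big|\; \zeta\le\sum_{i=1}^n c_i\,\psi\circ\gamma_i^{-1},\ c_i>0,\ \gamma_i\in\Gamma,\ n\in\mathbb N\Big\}$$ and $L_\psi(\zeta)=(\zeta:\psi)/(\chi:\psi)$. If $\eta>0$ and $\xi,\xi'\in C_c(X)_{\ge0}$ satisfy $\xi+\xi'=\chi$, then there is $\delta>0$ such that for every $\psi\in C_c(X)_{>0}$ with $\mathrm{diam}(\mathrm{supp}\,\psi)<\delta$ and every $\zeta\in C_c(X_0)_{\ge0}$ we have $$L_\psi(\xi\zeta)+L_\psi(\xi'\zeta)\le(1+2\eta)L_\psi(\zeta).$$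
   Context: A local homeomorphism of $X$ is a homeomorphism $\gamma$ from an open subset $\mathrm{Dom}(\gamma)$ onto an open subset $\mathrm{Range}(\gamma)$. A pseudo*group is a set $\Gamma$ of local homeomorphisms such that: (1) if $\gamma\in\Gamma$ and $U\subset\mathrm{Dom}(\gamma)$ is open then $\gamma|_U\in\Gamma$; (2) the identity of $X$ is in $\Gamma$; (3) if $\gamma,\gamma'\in\Gamma$ and $\mathrm{Dom}(\gamma')=\mathrm{Range}(\gamma)$ then $\gamma'\circ\gamma\in\Gamma$; (4) if $\gamma\in\Gamma$ then $\gamma^{-1}\in\Gamma$. Minimal: every orbit $\{\gamma x\mid\gamma\in\Gamma,x\in\mathrm{Dom}(\gamma)\}$ is dense. Equicontinuous: for every $\epsilon>0$ there is $\delta(\epsilon)>0$ with $d(\gamma x,\gamma x')\le\epsilon$ whenever $\gamma\in\Gamma$, $x,x'\in\mathrm{Dom}(\gamma)$, $d(x,x')<\delta(\epsilon)$. $C_c(X)$ is the space of real continuous compactly supported functions on $X$; $C_c(X)_{\ge0}=\{\zeta\in C_c(X)\mid\zeta\ge0\}$; $C_c(X)_{>0}=\{\zeta\in C_c(X)_{\ge0}\mid\zeta(x)>0$ for some $x\}$; $C_c(X_0)_{\ge0}$ denotes the nonnegative continuous functions with compact support contained in $X_0$ (viewed as functions on $X$ vanishing outside $X_0$). For $\psi\in C_c(X)$ and $\gamma\in\Gamma$, $\psi\circ\gamma^{-1}$ denotes the function on $X$ equal to $\psi(\gamma^{-1}x)$ on $\mathrm{Range}(\gamma)$ and $0$ outside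 $\mathrm{Range}(\gamma)$. *)

theory Defs
  imports "HOL-Analysis.Analysis"
begin

text \<open>The space X is the whole type 'a (a metric space). A local homeomorphism is
  represented as a partial map 'a \<Rightarrow> 'a option: Dom = dom, Range = ran.\<close>

definition local_homeo :: "('a::topological_space \<rightharpoonup> 'a) \<Rightarrow> bool" where
  "local_homeo \<gamma> \<longleftrightarrow> open (dom \<gamma>) \<and> open (ran \<gamma>) \<and>
     (\<exists>g. homeomorphism (dom \<gamma>) (ran \<gamma>) (\<lambda>x. the (\<gamma> x)) g)"

definition inv_map :: "('a \<rightharpoonup> 'a) \<Rightarrow> ('a \<rightharpoonup> 'a)" where
  "inv_map \<gamma> y = (if y \<in> ran \<gamma> then Some (inv_into (dom \<gamma>) (\<lambda>x. the (\<gamma> x)) y) else None)"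

definition pseudo_star_group :: "('a::topological_space \<rightharpoonup> 'a) set \<Rightarrow> bool" where
  "pseudo_star_group \<Gamma> \<longleftrightarrow>
     (\<forall>\<gamma>\<in>\<Gamma>. local_homeo \<gamma>) \<and>
     (\<forall>\<gamma>\<in>\<Gamma>. \<forall>U. open U \<and> U \<subseteq> dom \<gamma> \<longrightarrow> \<gamma> |` U \<in> \<Gamma>) \<and>
     Some \<in> \<Gamma> \<and>
     (\<forall>\<gamma>\<in>\<Gamma>. \<forall>\<gamma>'\<in>\<Gamma>. dom \<gamma>' = ran \<gamma> \<longrightarrow> \<gamma>' \<circ>\<^sub>m \<gamma> \<in> \<Gamma>) \<and>
     (\<forall>\<gamma>\<in>\<Gamma>. inv_map \<gamma> \<in> \<Gamma>)"

definition orbit :: "('a \<rightharpoonup> 'a) set \<Rightarrow> 'a \<Rightarrow> 'a set" where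
  "orbit \<Gamma> x = {the (\<gamma> x) | \<gamma>. \<gamma> \<in> \<Gamma> \<and> x \<in> dom \<gamma>}"

definition minimal_pg :: "('a::topological_space \<rightharpoonup> 'a) set \<Rightarrow> bool" where
  "minimal_pg \<Gamma> \<longleftrightarrow> (\<forall>x. closure (orbit \<Gamma> x) = UNIV)"

definition equicontinuous_pg :: "('a::metric_space \<rightharpoonup> 'a) set \<Rightarrow> bool" where
  "equicontinuous_pg \<Gamma> \<longleftrightarrow> (\<forall>\<epsilon>>0. \<exists>\<delta>>0. \<forall>\<gamma>\<in>\<Gamma>. \<forall>x\<in>dom \<gamma>. \<forall>x'\<in>dom \<gamma>.
      dist x x' < \<delta> \<longrightarrow> dist (the (\<gamma> x)) (the (\<gamma> x')) \<le> \<epsilon>)"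

definition csupp :: "('a::topological_space \<Rightarrow> real) \<Rightarrow> 'a set" where
  "csupp f = closure {x. f x \<noteq> 0}"

definition Cc :: "('a::topological_space \<Rightarrow> real) set" where
  "Cc = {f. continuous_on UNIV f \<and> compact (csupp f)}"

definition Cc_nonneg :: "('a::topological_space \<Rightarrow> real) set" where
  "Cc_nonneg = {f \<in> Cc. \<forall>x. f x \<ge> 0}"

definition Cc_pos :: "('a::topological_space \<Rightarrow> real) set" where
  "Cc_pos = {f \<in> Cc_nonneg. \<exists>x. f x > 0}"

definition Cc_nonneg_on :: "'a::topological_space set \<Rightarrow> ('a \<Rightarrow> real) set" where
  "Cc_nonneg_on X0 = {f \<in> Cc_nonneg. csupp f \<subseteq> X0}"

definition transl :: "('a \<Rightarrow> real) \<Rightarrow> ('a \<rightharpoonup> 'a) \<Rightarrow> 'a \<Rightarrow> real" where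
  "transl \<psi> \<gamma> x = (if x \<in> ran \<gamma> then \<psi> (the (inv_map \<gamma> x)) else 0)"

definition cover_num :: "('a \<rightharpoonup> 'a) set \<Rightarrow> ('a \<Rightarrow> real) \<Rightarrow> ('a \<Rightarrow> real) \<Rightarrow> real" where
  "cover_num \<Gamma> \<zeta> \<psi> = Inf {(\<Sum>i<n. c i) | (n::nat) c g.
      (\<forall>i<n. c i > 0 \<and> g i \<in> \<Gamma>) \<and> (\<forall>x. \<zeta> x \<le> (\<Sum>i<n. c i * transl \<psi> (g i) x))}"

definition L_fun :: "('a \<rightharpoonup> 'a) set \<Rightarrow> ('a \<Rightarrow> real) \<Rightarrow> ('a \<Rightarrow> real) \<Rightarrow> ('a \<Rightarrow> real) \<Rightarrow> real" where
  "L_fun \<Gamma> chi \<psi> \<zeta> = cover_num \<Gamma> \<zeta> \<psi> / cover_num \<Gamma> chi \<psi>"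

end

theory Submission
  imports Defs
begin

lemma csupp_mem: "f x \<noteq> 0 \<Longrightarrow> x \<in> csupp f"
  unfolding csupp_def by (rule subsetD[OF closure_subset]) simp

lemma csupp_zero: "x \<notin> csupp f \<Longrightarrow> f x = 0"
  using csupp_mem by metis

lemma cc_unif:
  fixes f :: "'a::metric_space \<Rightarrow> real"
  assumes "f \<in> Cc" "e > 0"
  shows "\<exists>d>0. \<forall>x y. dist x y < d \<longrightarrow> \<bar>f x - f y\<bar> < e"
proof -
  let ?K = "csupp f"
  have K: "compact ?K" and cont: "continuous_on UNIV f" using assms by (auto simp: Cc_def)
  have e2: "e/2 > 0" using assms by simp
  have "\<exists>r>0. \<forall>y. dist y x < r \<longrightarrow> dist (f y) (f x) < e/2" for x
    using cont e2 unfolding continuous_on_iff by blast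
  hence "\<forall>x. \<exists>r. r > 0 \<and> (\<forall>y. dist y x < r \<longrightarrow> \<bar>f y - f x\<bar> < e/2)" by (simp add: dist_real_def)
  from choice[OF this] obtain r where r0: "\<forall>x. r x > 0 \<and> (\<forall>y. dist y x < r x \<longrightarrow> \<bar>f y - f x\<bar> < e/2)" by blast
  have r1: "\<And>x. r x > 0" using r0 by blast
  have r2: "\<And>x y. dist y x < r x \<Longrightarrow> \<bar>f y - f x\<bar> < e/2" using r0 by blast
  have "?K \<subseteq> \<Union> ((\<lambda>x. ball x (r x)) ` ?K)"
  proof
    fix y assume "y \<in> ?K"
    moreover have "y \<in> ball y (r y)" using r1[of y] by simp
    ultimately show "y \<in> \<Union> ((\<lambda>x. ball x (r x)) ` ?K)" by blast
  qed
  then obtain k where k: "k>0" "\<And>x. x \<in> ?K \<Longrightarrow> \<exists>G\<in>(\<lambda>x. ball x (r x)) ` ?K. ball x k \<subseteq> G"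
    by (rule Heine_Borel_lemma[OF K]) auto
  have main: "\<bar>f u - f v\<bar> < e" if u: "u \<in> ?K" and d: "dist u v < k" for u v
  proof -
    obtain z where "ball u k \<subseteq> ball z (r z)" using k(2)[OF u] by blast
    moreover have "u \<in> ball u k" "v \<in> ball u k" using k(1) d by auto
    ultimately have "u \<in> ball z (r z)" "v \<in> ball z (r z)" by blast+
    then have "dist z u < r z" "dist z v < r z" by simp_all
    then have "\<bar>f u - f z\<bar> < e/2" "\<bar>f v - f z\<bar> < e/2" using r2[of u z] r2[of v z] by (simp_all add: dist_commute)
    then show ?thesis by linarith
  qed
  have H: "\<bar>f x - f y\<bar> < e" if d: "dist x y < k" for x y
  proof (cases "x \<in> ?K")
    case True then show ?thesis using main d by blast
  next
    case xn: False
    show ?thesis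
    proof (cases "y \<in> ?K")
      case True
      have "dist y x < k" using d by (simp add: dist_commute)
      then have "\<bar>f y - f x\<bar> < e" using main True by blast
      then show ?thesis by linarith
    next
      case False
      then have "f x = 0" "f y = 0" using xn csupp_zero by metis+
      then show ?thesis using assms by simp
    qed
  qed
  show ?thesis
  proof (intro exI[where x=k] conjI allI impI)
    show "k > 0" by (rule k(1))
    fix x y :: 'a assume "dist x y < k"
    then show "\<bar>f x - f y\<bar> < e" by (rule H)
  qed
qed

lemma transl_pre:
  assumes "x \<in> ran g"
  shows "the (inv_map g x) \<in> dom g \<and> the (g (the (inv_map g x))) = x"
proof -
  from assms obtain a where "g a = Some x" by (auto simp: ran_def)
  hence "x \<in> (\<lambda>x. the (g x)) ` dom g" by force
  thus ?thesis by (simp add: inv_map_def assms inv_into_into f_inv_into_f[where f="\<lambda>x. the (g x)"])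
qed

lemma transl_nonneg: "\<forall>x. \<psi> x \<ge> 0 \<Longrightarrow> transl \<psi> g x \<ge> 0"
  by (simp add: transl_def)

lemma inv_into_cong': "(\<And>x. x \<in> A \<Longrightarrow> F x = G x) \<Longrightarrow> inv_into A F y = inv_into A G y"
proof -
  assume a: "\<And>x. x \<in> A \<Longrightarrow> F x = G x"
  have "(\<lambda>x. x \<in> A \<and> F x = y) = (\<lambda>x. x \<in> A \<and> G x = y)" using a by auto
  thus ?thesis by (simp add: inv_into_def)
qed

lemma double_inv:
  assumes hom: "homeomorphism (dom \<gamma>) (ran \<gamma>) (\<lambda>x. the (\<gamma> x)) h" and y: "y \<in> dom \<gamma>"
  shows "transl \<psi> (inv_map \<gamma>) y = \<psi> (the (\<gamma> y))"
proof -
  let ?f = "\<lambda>x. the (\<gamma> x)"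
  have bij: "bij_betw ?f (dom \<gamma>) (ran \<gamma>)"
    using hom unfolding homeomorphism_def bij_betw_def by (metis inj_on_inverseI)
  have inj: "inj_on ?f (dom \<gamma>)" using bij bij_betw_def by blast
  have fy: "?f y \<in> ran \<gamma>" using bij y bij_betwE by blast
  have iv: "inv_map \<gamma> (?f y) = Some y"
    using fy by (simp add: inv_map_def inv_into_f_f[OF inj y])
  have yr: "y \<in> ran (inv_map \<gamma>)" using iv by (auto simp: ran_def)
  have dom: "dom (inv_map \<gamma>) = ran \<gamma>" by (auto simp: inv_map_def dom_def)
  have "the (inv_map (inv_map \<gamma>) y) = inv_into (ran \<gamma>) (\<lambda>z. the (inv_map \<gamma> z)) y"
    using yr dom by (simp add: inv_map_def)
  also have "\<dots> = inv_into (ran \<gamma>) (inv_into (dom \<gamma>) ?f) y"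
    by (rule inv_into_cong') (simp add: inv_map_def)
  also have "\<dots> = ?f y" using inv_into_inv_into_eq[OF bij y] .
  finally show ?thesis using yr by (simp add: transl_def)
qed

definition covset where
  "covset \<Gamma> \<zeta> \<psi> = {(\<Sum>i<n. c i) | (n::nat) c g.
      (\<forall>i<n. c i > 0 \<and> g i \<in> \<Gamma>) \<and> (\<forall>x. \<zeta> x \<le> (\<Sum>i<n. c i * transl \<psi> (g i) x))}"

lemma cover_num_covset: "cover_num \<Gamma> \<zeta> \<psi> = Inf (covset \<Gamma> \<zeta> \<psi>)"
  by (simp add: cover_num_def covset_def)

lemma covset_nonneg: "s \<in> covset \<Gamma> \<zeta> \<psi> \<Longrightarrow> s \<ge> 0"
  unfolding covset_def by (auto intro!: sum_nonneg simp: less_imp_le)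

lemma cover_num_le:
  fixes n :: nat
  assumes "\<forall>i<n. c i > 0 \<and> g i \<in> \<Gamma>" "\<forall>x. \<zeta> x \<le> (\<Sum>i<n. c i * transl \<psi> (g i) x)"
  shows "cover_num \<Gamma> \<zeta> \<psi> \<le> (\<Sum>i<n. c i)"
proof -
  have m: "(\<Sum>i<n. c i) \<in> covset \<Gamma> \<zeta> \<psi>" unfolding covset_def
    apply (rule CollectI) apply (rule exI[where x=n], rule exI[where x=c], rule exI[where x=g]) using assms by simp
  have "bdd_below (covset \<Gamma> \<zeta> \<psi>)" using covset_nonneg by (meson bdd_belowI)
  thus ?thesis using m by (simp add: cover_num_covset cInf_lower)
qed

lemma ex_gamma:
  assumes pg: "pseudo_star_group \<Gamma>" and min: "minimal_pg \<Gamma>" and c\<psi>: "continuous_on UNIV \<psi>"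
    and a: "a < \<psi> p"
  shows "\<exists>\<gamma>. \<gamma> \<in> \<Gamma> \<and> x \<in> dom \<gamma> \<and> open {y \<in> dom \<gamma>. a < \<psi> (the (\<gamma> y))}
      \<and> (\<forall>y\<in>dom \<gamma>. transl \<psi> (inv_map \<gamma>) y = \<psi> (the (\<gamma> y))) \<and> a < \<psi> (the (\<gamma> x))"
proof -
  have U: "open {y. a < \<psi> y}" using c\<psi> by (simp add: open_Collect_less continuous_on_const)
  have cl: "closure (orbit \<Gamma> x) = UNIV" using min by (simp add: minimal_pg_def)
  have "p \<in> {y. a < \<psi> y} \<inter> closure (orbit \<Gamma> x)" using a cl by simp
  hence "{y. a < \<psi> y} \<inter> closure (orbit \<Gamma> x) \<noteq> {}" by (metis empty_iff)
  hence "{y. a < \<psi> y} \<inter> orbit \<Gamma> x \<noteq> {}" using open_Int_closure_eq_empty[OF U] by simp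
  then obtain w where "w \<in> {y. a < \<psi> y} \<inter> orbit \<Gamma> x" by (metis ex_in_conv)
  hence w: "w \<in> orbit \<Gamma> x" "a < \<psi> w" by simp_all
  then obtain \<gamma> where \<gamma>: "\<gamma> \<in> \<Gamma>" "x \<in> dom \<gamma>" "w = the (\<gamma> x)" unfolding orbit_def by blast
  have lh: "local_homeo \<gamma>" using pg \<gamma>(1) by (simp add: pseudo_star_group_def)
  then obtain h where hom: "homeomorphism (dom \<gamma>) (ran \<gamma>) (\<lambda>x. the (\<gamma> x)) h" and od: "open (dom \<gamma>)"
    unfolding local_homeo_def by blast
  have cont: "continuous_on (dom \<gamma>) (\<lambda>x. the (\<gamma> x))" using hom by (simp add: homeomorphism_def)
  have cc: "continuous_on (dom \<gamma>) (\<lambda>y. \<psi> (the (\<gamma> y)))"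
    by (rule continuous_on_compose2[OF c\<psi> cont]) simp
  have o1: "open ((\<lambda>y. \<psi> (the (\<gamma> y))) -` {a<..} \<inter> dom \<gamma>)"
    using continuous_on_open_vimage[OF od, THEN iffD1, OF cc, rule_format, OF open_greaterThan] .
  have "(\<lambda>y. \<psi> (the (\<gamma> y))) -` {a<..} \<inter> dom \<gamma> = {y \<in> dom \<gamma>. a < \<psi> (the (\<gamma> y))}" by auto
  with o1 have oV: "open {y \<in> dom \<gamma>. a < \<psi> (the (\<gamma> y))}" by simp
  have di: "\<forall>y\<in>dom \<gamma>. transl \<psi> (inv_map \<gamma>) y = \<psi> (the (\<gamma> y))"
  proof
    fix y assume "y \<in> dom \<gamma>" thus "transl \<psi> (inv_map \<gamma>) y = \<psi> (the (\<gamma> y))" by (rule double_inv[OF hom])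
  qed
  have ax: "a < \<psi> (the (\<gamma> x))" using w(2) \<gamma>(3) by simp
  show ?thesis using \<gamma>(1,2) oV di ax by blast
qed


lemma cover_exists:
  assumes pg: "pseudo_star_group \<Gamma>" and min: "minimal_pg \<Gamma>" and f: "f \<in> Cc" and \<psi>: "\<psi> \<in> Cc_pos"
  shows "\<exists>(n::nat) c g. (\<forall>i<n. c i > 0 \<and> g i \<in> \<Gamma>) \<and> (\<forall>x. f x \<le> (\<Sum>i<n. c i * transl \<psi> (g i) x))"
proof -
  obtain p where p: "\<psi> p > 0" using \<psi> by (auto simp: Cc_pos_def)
  define a where "a = \<psi> p / 2"
  have a: "a > 0" "a < \<psi> p" using p by (auto simp: a_def)
  have c\<psi>: "continuous_on UNIV \<psi>" and \<psi>nn: "\<forall>x. \<psi> x \<ge> 0"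
    using \<psi> by (auto simp: Cc_pos_def Cc_nonneg_def Cc_def)
  have U: "open {y. a < \<psi> y}" using c\<psi> by (simp add: open_Collect_less continuous_on_const)
  have invc: "\<And>\<gamma>. \<gamma> \<in> \<Gamma> \<Longrightarrow> inv_map \<gamma> \<in> \<Gamma>" using pg by (simp add: pseudo_star_group_def)
  have lhc: "\<And>\<gamma>. \<gamma> \<in> \<Gamma> \<Longrightarrow> local_homeo \<gamma>" using pg by (simp add: pseudo_star_group_def)
  define V where "V \<gamma> = {y \<in> dom \<gamma>. a < \<psi> (the (\<gamma> y))}" for \<gamma> :: "'a \<rightharpoonup> 'a"
  have ex: "\<forall>x. \<exists>\<gamma>. \<gamma> \<in> \<Gamma> \<and> x \<in> dom \<gamma> \<and> open (V \<gamma>)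
      \<and> (\<forall>y\<in>dom \<gamma>. transl \<psi> (inv_map \<gamma>) y = \<psi> (the (\<gamma> y))) \<and> a < \<psi> (the (\<gamma> x))"
    unfolding V_def using ex_gamma[OF pg min c\<psi> a(2)] by blast
  from choice[OF ex] obtain G where G: "\<forall>x. G x \<in> \<Gamma> \<and> x \<in> dom (G x) \<and> open (V (G x))
      \<and> (\<forall>y\<in>dom (G x). transl \<psi> (inv_map (G x)) y = \<psi> (the (G x y))) \<and> a < \<psi> (the (G x x))" ..
  have G1: "\<And>x. G x \<in> \<Gamma>" and G2: "\<And>x. x \<in> dom (G x)" and G3: "\<And>x. open (V (G x))"
    and G4: "\<And>x y. y \<in> dom (G x) \<Longrightarrow> transl \<psi> (inv_map (G x)) y = \<psi> (the (G x y))"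
    and G5: "\<And>x. a < \<psi> (the (G x x))" using G by simp_all
  let ?K = "csupp f"
  have K: "compact ?K" and cf: "continuous_on UNIV f" using f by (auto simp: Cc_def)
  have cov: "?K \<subseteq> (\<Union>x\<in>?K. V (G x))"
  proof
    fix y assume y: "y \<in> ?K"
    have "y \<in> V (G y)" using G2[of y] G5[of y] by (simp add: V_def)
    thus "y \<in> (\<Union>x\<in>?K. V (G x))" using y by (rule UN_I[rotated])
  qed
  obtain T where T: "T \<subseteq> ?K" "finite T" "?K \<subseteq> (\<Union>x\<in>T. V (G x))"
    by (rule compactE_image[OF K, of ?K "\<lambda>x. V (G x)"]) (use G3 cov in simp_all)
  obtain xs where xs: "set xs = T" using finite_list[OF T(2)] by blast
  have "continuous_on ?K f" by (rule continuous_on_subset[OF cf subset_UNIV])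
  then have "compact (f ` ?K)" by (rule compact_continuous_image[OF _ K])
  then have "bounded (f ` ?K)" by (rule compact_imp_bounded)
  then obtain B where B0: "\<forall>z\<in>f ` ?K. \<bar>z\<bar> \<le> B" unfolding bounded_real by blast
  have B: "\<And>y. y \<in> ?K \<Longrightarrow> \<bar>f y\<bar> \<le> B" using B0 by simp
  define M where "M = max B 1"
  have M0: "M > 0" by (simp add: M_def)
  have Mf: "f y \<le> M" for y
  proof (cases "y \<in> ?K")
    case True
    then have "\<bar>f y\<bar> \<le> B" by (rule B)
    then show ?thesis unfolding M_def by linarith
  next
    case False
    then have "f y = 0" by (rule csupp_zero)
    then show ?thesis using M0 by simp
  qed
  define c where "c = (\<lambda>i::nat. M / a)"
  define g where "g = (\<lambda>i. inv_map (G (xs ! i)))"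
  have cg: "\<forall>i<length xs. c i > 0 \<and> g i \<in> \<Gamma>"
    using M0 a G1 invc by (simp add: c_def g_def)
  have tnn: "\<And>i y. c i * transl \<psi> (g i) y \<ge> 0"
  proof -
    fix i y
    have "transl \<psi> (g i) y \<ge> 0" using \<psi>nn by (rule transl_nonneg)
    moreover have "c i \<ge> 0" using M0 a by (simp add: c_def)
    ultimately show "c i * transl \<psi> (g i) y \<ge> 0" by simp
  qed
  have "f y \<le> (\<Sum>i<length xs. c i * transl \<psi> (g i) y)" for y
  proof (cases "y \<in> ?K")
    case False
    then have "f y = 0" by (rule csupp_zero)
    moreover have "(\<Sum>i<length xs. c i * transl \<psi> (g i) y) \<ge> 0" by (rule sum_nonneg) (rule tnn)
    ultimately show ?thesis by simp
  next
    case True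
    then obtain x0 where x0: "x0 \<in> T" "y \<in> V (G x0)" using T(3) by blast
    then obtain j where j: "j < length xs" "xs ! j = x0" using xs in_set_conv_nth[of x0 xs] by blast
    have jV: "y \<in> dom (G (xs!j))" "a < \<psi> (the (G (xs!j) y))" using x0(2) j(2) by (simp_all add: V_def)
    have "f y \<le> M" by (rule Mf)
    also have "M = c j * a" using a by (simp add: c_def)
    also have "\<dots> \<le> c j * transl \<psi> (g j) y"
    proof -
      have "transl \<psi> (g j) y = \<psi> (the (G (xs!j) y))" unfolding g_def by (rule G4[OF jV(1)])
      moreover have "c j > 0" using M0 a by (simp add: c_def)
      ultimately show ?thesis using jV(2) by simp
    qed
    also have "\<dots> \<le> (\<Sum>i<length xs. c i * transl \<psi> (g i) y)"
      by (rule member_le_sum) (simp_all add: j(1) tnn)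
    finally show ?thesis .
  qed
  then have "\<forall>x. f x \<le> (\<Sum>i<length xs. c i * transl \<psi> (g i) x)" by blast
  then show ?thesis using cg
    apply - apply (rule exI[where x="length xs"], rule exI[where x=c], rule exI[where x=g]) by simp
qed

lemma cover_mult:
  fixes n :: nat
  assumes c: "\<forall>i<n. c i > 0" and cov: "\<forall>x. \<zeta> x \<le> (\<Sum>i<n. c i * transl \<psi> (g i) x)"
    and \<zeta>nn: "\<forall>x. \<zeta> x \<ge> 0" and \<psi>nn: "\<forall>x. \<psi> x \<ge> 0" and Fnn: "\<forall>x. F x \<ge> 0"
    and close: "\<And>i x y. i<n \<Longrightarrow> transl \<psi> (g i) x > 0 \<Longrightarrow> transl \<psi> (g i) y > 0 \<Longrightarrow> F x \<le> F y + \<eta>"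
    and \<eta>: "\<eta>>0"
    and xi: "\<And>i. (\<exists>x. \<zeta> x > 0 \<and> transl \<psi> (g i) x > 0) \<Longrightarrow> \<zeta> (xi i) > 0 \<and> transl \<psi> (g i) (xi i) > 0"
  shows "F x * \<zeta> x \<le> (\<Sum>i<n. (if (\<exists>x. \<zeta> x > 0 \<and> transl \<psi> (g i) x > 0) then c i * (F (xi i) + \<eta>) else c i * \<eta>) * transl \<psi> (g i) x)"
proof -
  define d where "d i = (if (\<exists>x. \<zeta> x > 0 \<and> transl \<psi> (g i) x > 0) then c i * (F (xi i) + \<eta>) else c i * \<eta>)" for i
  have tnn: "\<And>i y. transl \<psi> (g i) y \<ge> 0" by (rule transl_nonneg[OF \<psi>nn])
  have dnn: "d i \<ge> 0" if "i < n" for i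
  proof -
    have ci: "c i > 0" using c that by blast
    have "F (xi i) + \<eta> \<ge> 0" using Fnn \<eta> by (simp add: add_nonneg_nonneg less_imp_le)
    hence "c i * (F (xi i) + \<eta>) \<ge> 0" "c i * \<eta> \<ge> 0" using ci \<eta> by simp_all
    thus ?thesis unfolding d_def by simp
  qed
  have "F x * \<zeta> x \<le> (\<Sum>i<n. d i * transl \<psi> (g i) x)"
  proof (cases "\<zeta> x > 0")
    case False
    then have "\<zeta> x = 0" using \<zeta>nn by (meson antisym not_le)
    moreover have "(\<Sum>i<n. d i * transl \<psi> (g i) x) \<ge> 0"
      by (rule sum_nonneg) (simp add: dnn tnn)
    ultimately show ?thesis by simp
  next
    case True
    have "F x * \<zeta> x \<le> F x * (\<Sum>i<n. c i * transl \<psi> (g i) x)"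
      by (rule mult_left_mono[OF cov[rule_format] Fnn[rule_format]])
    also have "\<dots> = (\<Sum>i<n. F x * (c i * transl \<psi> (g i) x))" by (simp add: sum_distrib_left)
    also have "\<dots> \<le> (\<Sum>i<n. d i * transl \<psi> (g i) x)"
    proof (rule sum_mono)
      fix i assume i: "i \<in> {..<n}"
      hence i': "i < n" by simp
      show "F x * (c i * transl \<psi> (g i) x) \<le> d i * transl \<psi> (g i) x"
      proof (cases "transl \<psi> (g i) x > 0")
        case False then have "transl \<psi> (g i) x = 0" using tnn[of i x] by linarith
        then show ?thesis by simp
      next
        case tp: True
        have g: "\<exists>x. \<zeta> x > 0 \<and> transl \<psi> (g i) x > 0" using True tp by blast
        have xg: "transl \<psi> (g i) (xi i) > 0" using xi[OF g] by blast
        have Fl: "F x \<le> F (xi i) + \<eta>" by (rule close[OF i' tp xg])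
        have nn: "c i * transl \<psi> (g i) x \<ge> 0" using c i' tnn[of i x] by (simp add: less_imp_le)
        have "F x * (c i * transl \<psi> (g i) x) \<le> (F (xi i) + \<eta>) * (c i * transl \<psi> (g i) x)"
          by (rule mult_right_mono[OF Fl nn])
        also have "\<dots> = d i * transl \<psi> (g i) x" unfolding d_def using g by (simp add: mult_ac)
        finally show ?thesis .
      qed
    qed
    finally show ?thesis .
  qed
  thus ?thesis unfolding d_def .
qed

theorem lemma1:
  fixes \<Gamma> :: "('a::metric_space \<rightharpoonup> 'a) set"
    and X0 :: "'a set" and chi \<xi> \<xi>' :: "'a \<Rightarrow> real" and \<eta> :: real
  assumes "locally_compact_space (euclidean :: 'a topology)"
    and "pseudo_star_group \<Gamma>" and "minimal_pg \<Gamma>" and "equicontinuous_pg \<Gamma>"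
    and "open X0" and "compact (closure X0)"
    and "chi \<in> Cc_pos" and "\<forall>x\<in>X0. chi x = 1"
    and "\<eta> > 0"
    and "\<xi> \<in> Cc_nonneg" and "\<xi>' \<in> Cc_nonneg" and "\<forall>x. \<xi> x + \<xi>' x = chi x"
  shows "\<exists>\<delta>>0. \<forall>\<psi>\<in>Cc_pos. diameter (csupp \<psi>) < \<delta> \<longrightarrow>
           (\<forall>\<zeta>\<in>Cc_nonneg_on X0.
              L_fun \<Gamma> chi \<psi> (\<lambda>x. \<xi> x * \<zeta> x) + L_fun \<Gamma> chi \<psi> (\<lambda>x. \<xi>' x * \<zeta> x)
                \<le> (1 + 2 * \<eta>) * L_fun \<Gamma> chi \<psi> \<zeta>)"
proof -
  have pg: "pseudo_star_group \<Gamma>" and mn: "minimal_pg \<Gamma>" and \<eta>: "\<eta> > 0" using assms by auto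
  have \<xi>C: "\<xi> \<in> Cc" "\<forall>x. \<xi> x \<ge> 0" and \<xi>'C: "\<xi>' \<in> Cc" "\<forall>x. \<xi>' x \<ge> 0"
    using assms(10,11) by (auto simp: Cc_nonneg_def)
  have chiC: "chi \<in> Cc" using assms(7) by (auto simp: Cc_pos_def Cc_nonneg_def)
  obtain e1 where e1: "e1>0" "\<forall>x y. dist x y < e1 \<longrightarrow> \<bar>\<xi> x - \<xi> y\<bar> < \<eta>" using cc_unif[OF \<xi>C(1) \<eta>] by blast
  obtain e2 where e2: "e2>0" "\<forall>x y. dist x y < e2 \<longrightarrow> \<bar>\<xi>' x - \<xi>' y\<bar> < \<eta>" using cc_unif[OF \<xi>'C(1) \<eta>] by blast
  define e where "e = min e1 e2 / 2"
  have e: "e > 0" "e < e1" "e < e2" using e1 e2 by (auto simp: e_def)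
  obtain \<delta> where \<delta>: "\<delta>>0" "\<forall>\<gamma>\<in>\<Gamma>. \<forall>x\<in>dom \<gamma>. \<forall>x'\<in>dom \<gamma>. dist x x' < \<delta> \<longrightarrow> dist (the (\<gamma> x)) (the (\<gamma> x')) \<le> e"
    using assms(4) e(1) unfolding equicontinuous_pg_def by blast
  show ?thesis
  proof (intro exI[where x=\<delta>] conjI ballI impI)
    show "\<delta>>0" by fact
    fix \<psi> \<zeta> :: "'a \<Rightarrow> real" assume \<psi>: "\<psi> \<in> Cc_pos" and d\<psi>: "diameter (csupp \<psi>) < \<delta>" and \<zeta>: "\<zeta> \<in> Cc_nonneg_on X0"
    have \<psi>nn: "\<forall>x. \<psi> x \<ge> 0" and \<psi>C: "\<psi> \<in> Cc" using \<psi> by (auto simp: Cc_pos_def Cc_nonneg_def)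
    have \<zeta>nn: "\<forall>x. \<zeta> x \<ge> 0" and \<zeta>C: "\<zeta> \<in> Cc" and \<zeta>X: "csupp \<zeta> \<subseteq> X0"
      using \<zeta> by (auto simp: Cc_nonneg_on_def Cc_nonneg_def)
    have b\<psi>: "bounded (csupp \<psi>)" using \<psi>C by (simp add: Cc_def compact_imp_bounded)
    have closeF: "F x \<le> F y + \<eta>"
      if F: "\<forall>x y. dist x y < e1' \<longrightarrow> \<bar>F x - F y\<bar> < \<eta>" "e < e1'" and g: "g \<in> \<Gamma>"
        and tx: "transl \<psi> g x > 0" and ty: "transl \<psi> g y > 0" for F :: "'a \<Rightarrow> real" and e1' g x y
    proof -
      have xr: "x \<in> ran g" using tx by (auto simp: transl_def split: if_splits)
      have yr: "y \<in> ran g" using ty by (auto simp: transl_def split: if_splits)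
      have "\<psi> (the (inv_map g x)) > 0" "\<psi> (the (inv_map g y)) > 0" using tx ty xr yr by (auto simp: transl_def)
      hence "the (inv_map g x) \<in> csupp \<psi>" "the (inv_map g y) \<in> csupp \<psi>"
        by (auto intro!: csupp_mem)
      hence "dist (the (inv_map g x)) (the (inv_map g y)) < \<delta>"
        by (intro le_less_trans[OF diameter_bounded_bound[OF b\<psi>] d\<psi>])
      hence "dist (the (g (the (inv_map g x)))) (the (g (the (inv_map g y)))) \<le> e"
        by (rule \<delta>(2)[rule_format, OF g transl_pre[OF xr, THEN conjunct1] transl_pre[OF yr, THEN conjunct1]])
      hence "dist x y \<le> e" using transl_pre[OF xr] transl_pre[OF yr] by simp
      hence "\<bar>F x - F y\<bar> < \<eta>" using F by auto
      thus ?thesis by linarith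
    qed
    have key: "cover_num \<Gamma> (\<lambda>x. \<xi> x * \<zeta> x) \<psi> + cover_num \<Gamma> (\<lambda>x. \<xi>' x * \<zeta> x) \<psi> \<le> (1+2*\<eta>) * s"
      if s: "s \<in> covset \<Gamma> \<zeta> \<psi>" for s
    proof -
      obtain n :: nat and c g where s_eq: "s = (\<Sum>i<n. c i)" and cg: "\<forall>i<n. c i > 0 \<and> g i \<in> \<Gamma>"
        and cov: "\<forall>x. \<zeta> x \<le> (\<Sum>i<n. c i * transl \<psi> (g i) x)" using s unfolding covset_def by blast
      have cpos: "\<forall>i<n. c i > 0" using cg by blast
      define good where "good i \<longleftrightarrow> (\<exists>x. \<zeta> x > 0 \<and> transl \<psi> (g i) x > 0)" for i
      define xi where "xi i = (SOME x. \<zeta> x > 0 \<and> transl \<psi> (g i) x > 0)" for i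
      have xi: "\<And>i. (\<exists>x. \<zeta> x > 0 \<and> transl \<psi> (g i) x > 0) \<Longrightarrow> \<zeta> (xi i) > 0 \<and> transl \<psi> (g i) (xi i) > 0"
        unfolding xi_def by (rule someI_ex)
      define c1 where "c1 i = (if good i then c i * (\<xi> (xi i) + \<eta>) else c i * \<eta>)" for i
      define c2 where "c2 i = (if good i then c i * (\<xi>' (xi i) + \<eta>) else c i * \<eta>)" for i
      have cl1: "\<And>i x y. i<n \<Longrightarrow> transl \<psi> (g i) x > 0 \<Longrightarrow> transl \<psi> (g i) y > 0 \<Longrightarrow> \<xi> x \<le> \<xi> y + \<eta>"
      proof -
        fix i x y assume "i<n" "transl \<psi> (g i) x > 0" "transl \<psi> (g i) y > 0"
        moreover have "g i \<in> \<Gamma>" using cg \<open>i<n\<close> by simp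
        ultimately show "\<xi> x \<le> \<xi> y + \<eta>" using closeF[OF e1(2) e(2), of "g i" x y] by simp
      qed
      have cl2: "\<And>i x y. i<n \<Longrightarrow> transl \<psi> (g i) x > 0 \<Longrightarrow> transl \<psi> (g i) y > 0 \<Longrightarrow> \<xi>' x \<le> \<xi>' y + \<eta>"
      proof -
        fix i x y assume "i<n" "transl \<psi> (g i) x > 0" "transl \<psi> (g i) y > 0"
        moreover have "g i \<in> \<Gamma>" using cg \<open>i<n\<close> by simp
        ultimately show "\<xi>' x \<le> \<xi>' y + \<eta>" using closeF[OF e2(2) e(3), of "g i" x y] by simp
      qed
      have cov1: "\<forall>x. \<xi> x * \<zeta> x \<le> (\<Sum>i<n. c1 i * transl \<psi> (g i) x)"
        unfolding c1_def good_def
        by (intro allI cover_mult[where n=n and c=c and \<zeta>=\<zeta> and \<psi>=\<psi> and g=g and F="\<xi>" and \<eta>=\<eta> and xi=xi])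
           (use cpos cov \<zeta>nn \<psi>nn \<xi>C(2) cl1 \<eta> xi in auto)
      have cov2: "\<forall>x. \<xi>' x * \<zeta> x \<le> (\<Sum>i<n. c2 i * transl \<psi> (g i) x)"
        unfolding c2_def good_def
        by (intro allI cover_mult[where n=n and c=c and \<zeta>=\<zeta> and \<psi>=\<psi> and g=g and F="\<xi>'" and \<eta>=\<eta> and xi=xi])
           (use cpos cov \<zeta>nn \<psi>nn \<xi>'C(2) cl2 \<eta> xi in auto)
      have pos1: "\<forall>i<n. c1 i > 0 \<and> g i \<in> \<Gamma>" using cg \<xi>C(2) \<eta>
        by (auto simp: c1_def intro!: mult_pos_pos add_nonneg_pos)
      have pos2: "\<forall>i<n. c2 i > 0 \<and> g i \<in> \<Gamma>" using cg \<xi>'C(2) \<eta>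
        by (auto simp: c2_def intro!: mult_pos_pos add_nonneg_pos)
      have "(\<Sum>i<n. c1 i) + (\<Sum>i<n. c2 i) = (\<Sum>i<n. c1 i + c2 i)" by (simp add: sum.distrib)
      also have "\<dots> \<le> (\<Sum>i<n. (1+2*\<eta>) * c i)"
      proof (rule sum_mono)
        fix i assume i: "i \<in> {..<n}"
        show "c1 i + c2 i \<le> (1+2*\<eta>) * c i"
        proof (cases "good i")
          case True
          then have "\<zeta> (xi i) > 0" using xi[OF True[unfolded good_def]] by simp
          then have "xi i \<in> csupp \<zeta>" by (intro csupp_mem) simp
          then have "chi (xi i) = 1" using \<zeta>X assms(8) by blast
          then have one: "\<xi> (xi i) + \<xi>' (xi i) = 1" using assms(12) by simp
          have "c1 i + c2 i = c i * (\<xi> (xi i) + \<xi>' (xi i)) + 2*\<eta>*c i"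
            using True by (simp add: c1_def c2_def algebra_simps)
          then show ?thesis using one by (simp add: algebra_simps)
        next
          case False
          have "c i > 0" using cg i by blast
          then show ?thesis using False by (simp add: c1_def c2_def algebra_simps)
        qed
      qed
      also have "\<dots> = (1+2*\<eta>) * s" by (simp add: s_eq sum_distrib_left)
      finally show ?thesis
        using cover_num_le[OF pos1 cov1] cover_num_le[OF pos2 cov2] by linarith
    qed
    obtain n :: nat and c g where "(\<forall>i<n. c i > 0 \<and> g i \<in> \<Gamma>) \<and> (\<forall>x. \<zeta> x \<le> (\<Sum>i<n. c i * transl \<psi> (g i) x))"
      using cover_exists[OF pg mn \<zeta>C \<psi>] by blast
    hence "(\<Sum>i<n. c i) \<in> covset \<Gamma> \<zeta> \<psi>" unfolding covset_def
      apply - apply (rule CollectI) apply (rule exI[where x=n], rule exI[where x=c], rule exI[where x=g]) by simp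
    hence ne: "covset \<Gamma> \<zeta> \<psi> \<noteq> {}" by blast
    obtain n2 :: nat and c2 g2 where "(\<forall>i<n2. c2 i > 0 \<and> g2 i \<in> \<Gamma>) \<and> (\<forall>x. chi x \<le> (\<Sum>i<n2. c2 i * transl \<psi> (g2 i) x))"
      using cover_exists[OF pg mn chiC \<psi>] by blast
    hence "(\<Sum>i<n2. c2 i) \<in> covset \<Gamma> chi \<psi>" unfolding covset_def
      apply - apply (rule CollectI) apply (rule exI[where x=n2], rule exI[where x=c2], rule exI[where x=g2]) by simp
    hence ne2: "covset \<Gamma> chi \<psi> \<noteq> {}" by blast
    have C: "cover_num \<Gamma> chi \<psi> \<ge> 0"
      unfolding cover_num_covset by (rule cInf_greatest[OF ne2]) (rule covset_nonneg)
    have pe: "1 + 2*\<eta> > 0" using \<eta> by simp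
    let ?a = "cover_num \<Gamma> (\<lambda>x. \<xi> x * \<zeta> x) \<psi>" and ?b = "cover_num \<Gamma> (\<lambda>x. \<xi>' x * \<zeta> x) \<psi>"
    have "(?a + ?b) / (1+2*\<eta>) \<le> Inf (covset \<Gamma> \<zeta> \<psi>)"
    proof (rule cInf_greatest[OF ne])
      fix s assume "s \<in> covset \<Gamma> \<zeta> \<psi>"
      then show "(?a + ?b) / (1+2*\<eta>) \<le> s" using key pe by (simp add: pos_divide_le_eq mult.commute)
    qed
    hence A: "?a + ?b \<le> (1+2*\<eta>) * cover_num \<Gamma> \<zeta> \<psi>"
      using pe by (simp add: cover_num_covset pos_divide_le_eq mult.commute)
    have "L_fun \<Gamma> chi \<psi> (\<lambda>x. \<xi> x * \<zeta> x) + L_fun \<Gamma> chi \<psi> (\<lambda>x. \<xi>' x * \<zeta> x)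
        = (?a + ?b) / cover_num \<Gamma> chi \<psi>" by (simp add: L_fun_def add_divide_distrib)
    also have "\<dots> \<le> ((1+2*\<eta>) * cover_num \<Gamma> \<zeta> \<psi>) / cover_num \<Gamma> chi \<psi>" by (rule divide_right_mono[OF A C])
    also have "\<dots> = (1 + 2 * \<eta>) * L_fun \<Gamma> chi \<psi> \<zeta>" by (simp add: L_fun_def)
    finally show "L_fun \<Gamma> chi \<psi> (\<lambda>x. \<xi> x * \<zeta> x) + L_fun \<Gamma> chi \<psi> (\<lambda>x. \<xi>' x * \<zeta> x)
                \<le> (1 + 2 * \<eta>) * L_fun \<Gamma> chi \<psi> \<zeta>" .
  qed
qed

end
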